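(* Let $K$ be an algebraically closed field of characteristic $p>0$ (in the setting below). Then there exists a sequence $x_1,x_2,\dots\in K^\vee$ such that $\{\pi(x_1),\pi(x_2),\dots\}$ is an orthogonal subset of $K^\vee/K$, where $\pi:K^\vee\to K^\vee/K$ is the canonical quotient map.
   Context: $K$ is a complete non-archimedean non-trivially valued field which is not spherically complete; $K^\vee$ is a fixed spherically complete valued field which is an immediate extension of $K$, regarded as a $K$-normed space with its absolute value. $K^\vee/K$ carries the quotient norm $\|\pi(z)\|=\inf_{a\in K}|z-a|$. A subset $S$ not containing $0$ is orthogonal if $\|\sum_i\lambda_is_i\|=\max_i\|\lambda_is_i\|$ for all finitely many distinct $s_i\in S$ and $\lambda_i\in K$. *)

theory Defs
  imports Main "HOL.Real"
begin

text \<open>Valued fields are modelled inside one field type 'a playing the role of K^vee,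
  with an absolute value v on 'a and a subfield K :: 'a set.\<close>

definition nonarch_abs :: "('a::field \<Rightarrow> real) \<Rightarrow> bool" where
  "nonarch_abs v \<longleftrightarrow> (\<forall>x. v x \<ge> 0) \<and> (\<forall>x. v x = 0 \<longleftrightarrow> x = 0)
     \<and> (\<forall>x y. v (x * y) = v x * v y) \<and> (\<forall>x y. v (x + y) \<le> max (v x) (v y))"

definition subfield :: "'a::field set \<Rightarrow> bool" where
  "subfield K \<longleftrightarrow> 0 \<in> K \<and> 1 \<in> K \<and> (\<forall>x\<in>K. \<forall>y\<in>K. x + y \<in> K \<and> x * y \<in> K)
     \<and> (\<forall>x\<in>K. - x \<in> K) \<and> (\<forall>x\<in>K. x \<noteq> 0 \<longrightarrow> inverse x \<in> K)"

definition complete_wrt :: "('a::field \<Rightarrow> real) \<Rightarrow> 'a set \<Rightarrow> bool" where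
  "complete_wrt v K \<longleftrightarrow> (\<forall>s::nat \<Rightarrow> 'a. (\<forall>n. s n \<in> K) \<longrightarrow>
     (\<forall>e>0. \<exists>N. \<forall>m\<ge>N. \<forall>n\<ge>N. v (s m - s n) < e) \<longrightarrow>
     (\<exists>l\<in>K. \<forall>e>0. \<exists>N. \<forall>n\<ge>N. v (s n - l) < e))"

definition nontrivially_valued :: "('a::field \<Rightarrow> real) \<Rightarrow> 'a set \<Rightarrow> bool" where
  "nontrivially_valued v K \<longleftrightarrow> (\<exists>a\<in>K. v a \<noteq> 0 \<and> v a \<noteq> 1)"

definition cball_in :: "('a::field \<Rightarrow> real) \<Rightarrow> 'a set \<Rightarrow> 'a \<Rightarrow> real \<Rightarrow> 'a set" where
  "cball_in v S c r = {x\<in>S. v (x - c) \<le> r}"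

definition spherically_complete :: "('a::field \<Rightarrow> real) \<Rightarrow> 'a set \<Rightarrow> bool" where
  "spherically_complete v S \<longleftrightarrow> (\<forall>F::('a \<times> real) set.
     F \<noteq> {} \<longrightarrow> (\<forall>(c,r)\<in>F. c \<in> S \<and> r > 0) \<longrightarrow>
     (\<forall>(c,r)\<in>F. \<forall>(c',r')\<in>F. cball_in v S c r \<subseteq> cball_in v S c' r' \<or> cball_in v S c' r' \<subseteq> cball_in v S c r) \<longrightarrow>
     (\<Inter>(c,r)\<in>F. cball_in v S c r) \<noteq> {})"

text \<open>Immediate extension of K to the whole field 'a: same value group and same residue field.\<close>
definition immediate_ext :: "('a::field \<Rightarrow> real) \<Rightarrow> 'a set \<Rightarrow> bool" where
  "immediate_ext v K \<longleftrightarrow> v ` (UNIV - {0}) = v ` (K - {0})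
     \<and> (\<forall>x. v x \<le> 1 \<longrightarrow> (\<exists>a\<in>K. v a \<le> 1 \<and> v (x - a) < 1))"

definition alg_closed_sub :: "'a::field set \<Rightarrow> bool" where
  "alg_closed_sub K \<longleftrightarrow> (\<forall>n::nat. \<forall>c::nat \<Rightarrow> 'a. n \<ge> 1 \<longrightarrow> (\<forall>i<n. c i \<in> K) \<longrightarrow>
     (\<exists>x\<in>K. x ^ n + (\<Sum>i<n. c i * x ^ i) = 0))"

text \<open>Quotient norm on K^vee / K: the norm of pi(z).\<close>
definition qnorm :: "('a::field \<Rightarrow> real) \<Rightarrow> 'a set \<Rightarrow> 'a \<Rightarrow> real" where
  "qnorm v K z = (INF a\<in>K. v (z - a))"

end

theory Submission
  imports Defs Complex_Main "HOL-Computational_Algebra.Polynomial" "HOL-Computational_Algebra.Primes"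
    "HOL-Computational_Algebra.Euclidean_Algorithm"
begin

locale vf =
  fixes v :: "'a::field \<Rightarrow> real" and K :: "'a set"
  assumes nav: "nonarch_abs v" and sf: "subfield K"
begin

lemma v_nonneg[simp]: "0 \<le> v x" using nav unfolding nonarch_abs_def by blast
lemma v_zero_iff[simp]: "v x = 0 \<longleftrightarrow> x = 0" using nav unfolding nonarch_abs_def by blast
lemma v_0[simp]: "v 0 = 0" by simp
lemma v_mult: "v (x*y) = v x * v y" using nav unfolding nonarch_abs_def by blast
lemma v_ultra: "v (x+y) \<le> max (v x) (v y)" using nav unfolding nonarch_abs_def by blast

lemma v_one[simp]: "v 1 = 1"
proof -
  have "v 1 * 1 = v 1 * v 1" using v_mult[of 1 1] by simp
  moreover have "v 1 \<noteq> 0" by simp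
  ultimately show ?thesis by (metis mult_left_cancel)
qed

lemma v_minus[simp]: "v (-x) = v x"
proof -
  have h: "v (-1) * v (-1) = 1" using v_mult[of "-1" "-1"] by simp
  have "(v (-1) - 1) * (v (-1) + 1) = 0" using h by (simp add: algebra_simps)
  moreover have "v (-1) + 1 > 0" using v_nonneg[of "-1"] by linarith
  ultimately have "v (-1) = 1" by simp
  then show ?thesis using v_mult[of "-1" x] by simp
qed

lemma v_ultra_diff: "v (x - y) \<le> max (v x) (v y)" using v_ultra[of x "-y"] by simp
lemma v_less: "v x < e \<Longrightarrow> v y < e \<Longrightarrow> v (x + y) < e"
  by (meson le_less_trans max_less_iff_conj v_ultra)
lemma v_power: "v (x^n) = v x ^ n" by (induct n) (simp_all add: v_mult)
lemma v_prod_list: "v (prod_list xs) = prod_list (map v xs)" by (induct xs) (simp_all add: v_mult)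

lemma K0[simp]: "0 \<in> K" using sf unfolding subfield_def by blast
lemma K1[simp]: "1 \<in> K" using sf unfolding subfield_def by blast
lemma K_add: "x \<in> K \<Longrightarrow> y \<in> K \<Longrightarrow> x + y \<in> K" using sf unfolding subfield_def by blast
lemma K_mult: "x \<in> K \<Longrightarrow> y \<in> K \<Longrightarrow> x * y \<in> K" using sf unfolding subfield_def by blast
lemma K_uminus: "x \<in> K \<Longrightarrow> - x \<in> K" using sf unfolding subfield_def by blast
lemma K_diff: "x \<in> K \<Longrightarrow> y \<in> K \<Longrightarrow> x - y \<in> K" using K_add K_uminus by (metis diff_conv_add_uminus)
lemma K_inverse: "x \<in> K \<Longrightarrow> inverse x \<in> K"
  using sf unfolding subfield_def by (cases "x = 0") auto
lemma K_divide: "x \<in> K \<Longrightarrow> y \<in> K \<Longrightarrow> x / y \<in> K" using K_mult K_inverse by (metis divide_inverse)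
lemma K_power: "x \<in> K \<Longrightarrow> x ^ n \<in> K" by (induct n) (simp_all add: K_mult)
lemma K_sum: "(\<And>i. i \<in> A \<Longrightarrow> f i \<in> K) \<Longrightarrow> sum f A \<in> K"
  by (induct A rule: infinite_finite_induct) (simp_all add: K_add)

lemma K_poly: "\<forall>i. coeff f i \<in> K \<Longrightarrow> x \<in> K \<Longrightarrow> poly f x \<in> K"
  by (simp add: poly_altdef K_sum K_mult K_power)

lemma K_ne: "K \<noteq> {}" using K0 by blast
lemma qbdd: "bdd_below ((\<lambda>a. v (y - a)) ` K)" by (rule bdd_belowI[of _ 0]) auto

lemma Q1: "a \<in> K \<Longrightarrow> qnorm v K y \<le> v (y - a)"
  unfolding qnorm_def by (rule cINF_lower[OF qbdd])
lemma Q3: "(\<And>a. a \<in> K \<Longrightarrow> c \<le> v (y - a)) \<Longrightarrow> c \<le> qnorm v K y"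
  unfolding qnorm_def by (rule cINF_greatest[OF K_ne])
lemma Q2: "0 \<le> qnorm v K y" by (rule Q3) simp
lemma Q4: "qnorm v K y < e \<Longrightarrow> \<exists>a\<in>K. v (y - a) < e"
  unfolding qnorm_def using cINF_less_iff[OF K_ne qbdd] by blast

lemma Q5: "qnorm v K (y1 + y2) \<le> max (qnorm v K y1) (qnorm v K y2)"
proof (rule ccontr)
  assume "\<not> ?thesis"
  hence l: "max (qnorm v K y1) (qnorm v K y2) < qnorm v K (y1 + y2)" by (meson not_le)
  obtain a1 where a1: "a1 \<in> K" "v (y1 - a1) < qnorm v K (y1+y2)" using Q4 l by (meson max_less_iff_conj)
  obtain a2 where a2: "a2 \<in> K" "v (y2 - a2) < qnorm v K (y1+y2)" using Q4 l by (meson max_less_iff_conj)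
  have "qnorm v K (y1+y2) \<le> v (y1 + y2 - (a1 + a2))" using Q1 K_add a1 a2 by blast
  also have "y1 + y2 - (a1+a2) = (y1 - a1) + (y2 - a2)" by simp
  also have "v ((y1 - a1) + (y2 - a2)) < qnorm v K (y1+y2)" using v_less a1 a2 by blast
  finally show False by simp
qed

lemma Q5sum: "finite I \<Longrightarrow> I \<noteq> {} \<Longrightarrow> qnorm v K (\<Sum>i\<in>I. f i) \<le> (MAX i\<in>I. qnorm v K (f i))"
proof (induction I rule: finite_ne_induct)
  case (singleton x) then show ?case by simp
next
  case (insert x F)
  have "qnorm v K (\<Sum>i\<in>insert x F. f i) = qnorm v K (f x + (\<Sum>i\<in>F. f i))" using insert by simp
  also have "\<dots> \<le> max (qnorm v K (f x)) (qnorm v K (\<Sum>i\<in>F. f i))" by (rule Q5)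
  also have "\<dots> \<le> max (qnorm v K (f x)) (MAX i\<in>F. qnorm v K (f i))"
    by (intro max.mono) (simp_all add: insert.IH)
  also have "\<dots> = (MAX i\<in>insert x F. qnorm v K (f i))" using insert by simp
  finally show ?case .
qed

lemma Q6:
  assumes cK: "c \<in> K" shows "qnorm v K (c * y) \<le> v c * qnorm v K y"
proof (cases "c = 0")
  case True then show ?thesis using Q1[of 0 0] by simp
next
  case False
  have vc: "v c > 0" using False v_nonneg[of c] v_zero_iff[of c] by linarith
  have "qnorm v K (c*y) / v c \<le> qnorm v K y"
  proof (rule Q3)
    fix a assume "a \<in> K"
    hence "qnorm v K (c*y) \<le> v (c*y - c*a)" using Q1 K_mult cK by blast
    also have "c*y - c*a = c*(y-a)" by (simp add: algebra_simps)
    finally show "qnorm v K (c*y) / v c \<le> v (y-a)" using vc by (simp add: v_mult pos_divide_le_eq mult.commute)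
  qed
  thus ?thesis using vc by (simp add: pos_divide_le_eq mult.commute)
qed

lemma Q7:
  assumes q: "0 < q" and frob: "\<And>x y::'a. (x - y)^q = x^q - y^q"
  shows "qnorm v K (z^q) \<le> (qnorm v K z)^q"
proof (rule ccontr)
  let ?e = "qnorm v K (z^q)" let ?d = "qnorm v K z"
  assume "\<not> ?thesis" hence lt: "?d^q < ?e" by simp
  define r where "r = root q ?e"
  have e0: "0 \<le> ?e" by (rule Q2)
  have rq: "r^q = ?e" unfolding r_def using q e0 by simp
  have r0: "0 \<le> r" unfolding r_def using e0 by (rule real_root_ge_zero)
  have "?d < r" using lt rq r0 by (metis power_less_imp_less_base)
  then obtain a where a: "a \<in> K" "v (z - a) < r" using Q4 by blast
  have "?e \<le> v (z^q - a^q)" using Q1 K_power a by blast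
  also have "\<dots> = v(z-a)^q" using frob[of z a] v_power[of "z-a" q] by simp
  also have "\<dots> < r^q" using a q by (simp add: power_strict_mono)
  finally show False using rq by simp
qed

lemma arch: "0 < (e::real) \<Longrightarrow> \<exists>N::nat. \<forall>n\<ge>N. 1/(real n + 1) < e"
proof -
  assume e: "0 < e"
  obtain N::nat where N: "1/e < real N" using reals_Archimedean2 by blast
  show ?thesis
  proof (intro exI allI impI)
    fix n assume "N \<le> n"
    hence "1/e < real n + 1" using N by linarith
    thus "1/(real n + 1) < e" using e by (simp add: field_simps)
  qed
qed

lemma d_pos:
  assumes comp: "complete_wrt v K" and zK: "z \<notin> K" shows "0 < qnorm v K z"
proof (rule ccontr)
  assume "\<not> ?thesis" hence d0: "qnorm v K z = 0" using Q2[of z] by linarith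
  have "\<forall>n::nat. \<exists>a\<in>K. v (z - a) < 1/(real n + 1)"
  proof
    fix n :: nat
    have "qnorm v K z < 1/(real n + 1)" using d0 by simp
    thus "\<exists>a\<in>K. v (z - a) < 1/(real n + 1)" by (rule Q4)
  qed
  then obtain s where s: "\<And>n. s n \<in> K" "\<And>n. v (z - s n) < 1/(real n + 1)" by metis
  have cauchy: "\<forall>e>0. \<exists>N. \<forall>m\<ge>N. \<forall>n\<ge>N. v (s m - s n) < e"
  proof (intro allI impI)
    fix e::real assume "e > 0"
    then obtain N where N: "\<forall>n\<ge>N. 1/(real n + 1) < e" using arch by blast
    show "\<exists>N. \<forall>m\<ge>N. \<forall>n\<ge>N. v (s m - s n) < e"
    proof (intro exI allI impI)
      fix m n assume "N \<le> m" "N \<le> n"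
      have "v (z - s n) < e" "v (z - s m) < e" using s(2) N \<open>N \<le> m\<close> \<open>N \<le> n\<close> by (meson less_trans)+
      hence "v ((z - s n) + (- (z - s m))) < e" using v_less v_minus by metis
      moreover have "s m - s n = (z - s n) + (- (z - s m))" by simp
      ultimately show "v (s m - s n) < e" by metis
    qed
  qed
  then obtain l where l: "l \<in> K" "\<forall>e>0. \<exists>N. \<forall>n\<ge>N. v (s n - l) < e"
    using comp s(1) unfolding complete_wrt_def by blast
  have "v (z - l) = 0"
  proof (rule ccontr)
    assume "v (z - l) \<noteq> 0" hence e: "v (z - l) > 0" using v_nonneg[of "z - l"] by linarith
    obtain N1 where N1: "\<forall>n\<ge>N1. v (s n - l) < v (z - l)" using l e by blast
    obtain N2 where N2: "\<forall>n\<ge>N2. 1/(real n + 1) < v (z - l)" using arch e by blast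
    define n where "n = max N1 N2"
    have "v (z - s n) < v (z - l)" using s(2)[of n] N2 unfolding n_def by (meson less_trans max.cobounded2)
    moreover have "v (s n - l) < v (z - l)" using N1 unfolding n_def by simp
    ultimately have "v ((z - s n) + (s n - l)) < v (z - l)" using v_less by blast
    thus False by simp
  qed
  hence "z = l" by simp
  thus False using zK l by simp
qed

lemma root_exists:
  assumes acs: "alg_closed_sub K" and cK: "\<forall>i. coeff f i \<in> K" and deg: "degree f \<ge> 1"
  shows "\<exists>x\<in>K. poly f x = 0"
proof -
  let ?n = "degree f" let ?l = "lead_coeff f"
  have f0: "f \<noteq> 0" using deg by auto
  hence l0: "?l \<noteq> 0" by simp
  define c where "c i = coeff f i / ?l" for i
  have "\<forall>i<?n. c i \<in> K" using cK K_divide unfolding c_def by simp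
  then obtain x where x: "x \<in> K" "x ^ ?n + (\<Sum>i<?n. c i * x^i) = 0"
    using acs deg unfolding alg_closed_sub_def by blast
  have "poly f x = (\<Sum>i\<le>?n. coeff f i * x^i)" by (simp add: poly_altdef)
  also have "\<dots> = (\<Sum>i<?n. coeff f i * x^i) + ?l * x^?n"
    by (simp add: lessThan_Suc_atMost[symmetric])
  also have "\<dots> = ?l * (x ^ ?n + (\<Sum>i<?n. c i * x^i))"
    using l0 by (simp add: c_def algebra_simps sum_distrib_left)
  also have "\<dots> = 0" using x by simp
  finally show ?thesis using x by blast
qed

lemma synth_K: "\<forall>i. coeff f i \<in> K \<Longrightarrow> r \<in> K \<Longrightarrow> coeff (synthetic_div f r) i \<in> K"
proof (induction f arbitrary: i)
  case 0 then show ?case by simp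
next
  case (pCons a p)
  have cp: "\<forall>i. coeff p i \<in> K" using pCons.prems(1) by (metis coeff_pCons_Suc)
  show ?case
  proof (cases i)
    case 0 then show ?thesis using K_poly cp pCons.prems by simp
  next
    case (Suc j) then show ?thesis using pCons.IH cp pCons.prems by simp
  qed
qed

definition fac :: "'a list \<Rightarrow> 'a poly" where
  "fac rs = prod_list (map (\<lambda>r. [:-r, 1:]) rs)"

lemma FACT:
  assumes acs: "alg_closed_sub K"
  shows "\<forall>i. coeff f i \<in> K \<Longrightarrow> \<exists>rs. set rs \<subseteq> K \<and> f = smult (lead_coeff f) (fac rs)"
proof (induction "degree f" arbitrary: f)
  case 0
  hence "[:coeff f 0:] = f" by (intro degree_0_id) simp
  then show ?case using 0 by (intro exI[of _ "[]"]) (auto simp: fac_def)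
next
  case (Suc n)
  obtain r where r: "r \<in> K" "poly f r = 0" using root_exists[OF acs Suc.prems] Suc.hyps(2) by auto
  define g where "g = synthetic_div f r"
  have fg: "f = [:-r,1:] * g" using synthetic_div_correct'[of r f] r by (simp add: g_def)
  have dg: "n = degree g" using Suc.hyps(2) degree_synthetic_div[of f r] by (simp add: g_def)
  have gK: "\<forall>i. coeff g i \<in> K" using synth_K Suc.prems r unfolding g_def by blast
  obtain rs where rs: "set rs \<subseteq> K" "g = smult (lead_coeff g) (fac rs)" using Suc.hyps(1)[OF dg gK] by blast
  have "lead_coeff f = lead_coeff [:-r,1:] * lead_coeff g" by (metis fg lead_coeff_mult)
  hence lc: "lead_coeff f = lead_coeff g" by simp
  have "f = smult (lead_coeff f) (fac (r # rs))"
  proof -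
    have "f = [:-r,1:] * smult (lead_coeff g) (fac rs)" using fg rs(2) by simp
    also have "\<dots> = smult (lead_coeff f) (fac (r # rs))" using lc by (simp add: fac_def mult_smult_right)
    finally show ?thesis .
  qed
  then show ?case using rs r by (intro exI[of _ "r # rs"]) auto
qed

lemma poly_fac: "poly (fac rs) u = prod_list (map (\<lambda>r. u - r) rs)"
  by (induct rs) (simp_all add: fac_def algebra_simps)

lemma prod_list_mono_real:
  "(\<And>x. x \<in> set xs \<Longrightarrow> 0 \<le> f x \<and> f x \<le> g x) \<Longrightarrow> prod_list (map f xs) \<le> prod_list (map (g::_\<Rightarrow>real) xs)"
proof (induct xs)
  case Nil then show ?case by simp
next
  case (Cons a xs)
  have "0 \<le> prod_list (map f xs)" using Cons.prems by (intro prod_list_nonneg) auto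
  moreover have "prod_list (map f xs) \<le> prod_list (map g xs)" using Cons by simp
  moreover have "0 \<le> f a" "f a \<le> g a" using Cons.prems by auto
  ultimately show ?case by (simp add: mult_mono)
qed

lemma fac_bound: "0 \<le> s \<Longrightarrow> v (coeff (fac rs) i) * s^i \<le> prod_list (map (\<lambda>r. max s (v r)) rs)"
proof (induction rs arbitrary: i)
  case Nil then show ?case by (simp add: fac_def)
next
  case (Cons r rs)
  let ?g = "fac rs" let ?B = "prod_list (map (\<lambda>r. max s (v r)) rs)"
  let ?m = "max s (v r)"
  have B0: "0 \<le> ?B" using Cons.prems by (intro prod_list_nonneg) auto
  have m0: "0 \<le> ?m" using Cons.prems by simp
  have eq: "fac (r # rs) = smult (-r) ?g + pCons 0 ?g" by (simp add: fac_def)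
  have c: "coeff (fac (r#rs)) i = -r * coeff ?g i + (case i of 0 \<Rightarrow> 0 | Suc j \<Rightarrow> coeff ?g j)"
    by (simp add: eq coeff_pCons)
  have t1: "v (-r * coeff ?g i) * s^i \<le> ?m * ?B"
  proof -
    have "v (-r * coeff ?g i) * s^i = v r * (v (coeff ?g i) * s^i)" by (simp add: v_mult)
    also have "\<dots> \<le> v r * ?B" using Cons.IH[OF Cons.prems] by (simp add: mult_left_mono)
    also have "\<dots> \<le> ?m * ?B" using B0 by (simp add: mult_right_mono)
    finally show ?thesis .
  qed
  have t2: "v (case i of 0 \<Rightarrow> 0 | Suc j \<Rightarrow> coeff ?g j) * s^i \<le> ?m * ?B"
  proof (cases i)
    case 0 then show ?thesis using B0 m0 by simp
  next
    case (Suc j)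
    have "v (coeff ?g j) * s^i = s * (v (coeff ?g j) * s^j)" using Suc by simp
    also have "\<dots> \<le> s * ?B" using Cons.IH[OF Cons.prems] Cons.prems by (simp add: mult_left_mono)
    also have "\<dots> \<le> ?m * ?B" using B0 by (simp add: mult_right_mono)
    finally show ?thesis using Suc by simp
  qed
  let ?A = "v (-r * coeff ?g i)" let ?C = "v (case i of 0 \<Rightarrow> 0 | Suc j \<Rightarrow> coeff ?g j)"
  have "v (coeff (fac (r#rs)) i) \<le> max ?A ?C" unfolding c by (rule v_ultra)
  hence "v (coeff (fac (r#rs)) i) * s^i \<le> max ?A ?C * s^i"
    using Cons.prems by (simp add: mult_right_mono)
  also have "\<dots> \<le> ?m * ?B" using t1 t2 by (metis max_def)
  finally show ?case by simp
qed

lemma main_lb: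
  assumes acs: "alg_closed_sub K" and cK: "\<forall>i. coeff P i \<in> K"
    and add: "\<And>x y. poly P (x + y) = poly P x + poly P y" and aK: "a \<in> K"
  shows "v (coeff P i) * (qnorm v K z)^i \<le> v (poly P z - a)"
proof (cases "P = 0")
  case True then show ?thesis by simp
next
  case False
  let ?d = "qnorm v K z"
  have h: "poly P 0 = poly P 0 + poly P 0" using add[of 0 0] by (simp only: add_0_left)
  have P0: "poly P 0 = 0" using h by (metis add_cancel_right_right)
  have deg: "degree P \<ge> 1"
  proof (rule ccontr)
    assume "\<not> ?thesis" hence "degree P = 0" by simp
    hence e: "[:coeff P 0:] = P" by (rule degree_0_id)
    have "poly [:coeff P 0:] 0 = coeff P 0" by simp
    hence "coeff P 0 = 0" using P0 e by metis
    thus False using e False by simp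
  qed
  define Q where "Q = P - [:a:]"
  have QK: "\<forall>i. coeff Q i \<in> K" using cK aK by (auto simp: Q_def coeff_pCons K_diff split: nat.split)
  have "coeff Q (degree P) = lead_coeff P" using deg
    by (cases "degree P") (auto simp: Q_def coeff_pCons)
  hence "degree Q \<ge> degree P" using False by (simp add: le_degree)
  hence "degree Q \<ge> 1" using deg by simp
  then obtain a' where a': "a' \<in> K" "poly Q a' = 0" using root_exists[OF acs QK] by blast
  hence Pa': "poly P a' = a" by (simp add: Q_def)
  define t where "t = z - a'"
  have "poly P z = poly P t + poly P a'" using add[of t a'] by (simp add: t_def)
  hence Pt: "poly P z - a = poly P t" using Pa' by simp
  obtain rs where rs: "set rs \<subseteq> K" "P = smult (lead_coeff P) (fac rs)" using FACT[OF acs cK] by blast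
  let ?l = "lead_coeff P"
  have l0: "?l \<noteq> 0" using False by simp
  have polyP: "poly P x = ?l * prod_list (map (\<lambda>r. x - r) rs)" for x
  proof -
    have "poly P x = poly (smult ?l (fac rs)) x" using arg_cong[OF rs(2), of "\<lambda>q. poly q x"] .
    thus ?thesis by (simp add: poly_fac)
  qed
  have roots: "x \<in> set rs" if "poly P x = 0" for x
    using that polyP[of x] l0 by (auto simp: prod_list_zero_iff)
  have rs_roots: "poly P r = 0" if "r \<in> set rs" for r
    using that polyP[of r] by (auto simp: prod_list_zero_iff)
  have "0 \<in> set rs" using roots P0 by simp
  hence ne: "set rs \<noteq> {}" by auto
  let ?S = "(\<lambda>r. v (t - r)) ` set rs"
  have "Min ?S \<in> ?S" by (rule Min_in) (use ne in auto)
  then obtain r0 where r0: "r0 \<in> set rs" "v (t - r0) = Min ?S" by auto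
  have r0min: "v (t - r0) \<le> v (t - r)" if "r \<in> set rs" for r
    using r0(2) that by simp
  define u where "u = t - r0"
  have Pu: "poly P t = poly P u" using add[of u r0] rs_roots[OF r0(1)] by (simp add: u_def)
  have r0K: "r0 \<in> K" using rs(1) r0(1) by blast
  have zu: "z - (a' + r0) = u" by (simp add: u_def t_def)
  have su: "?d \<le> v u" using Q1[of "a' + r0" z] a'(1) r0K K_add zu by simp
  have d0: "0 \<le> ?d" by (rule Q2)
  have near: "0 \<le> max (v u) (v r) \<and> max (v u) (v r) \<le> v (u - r)" if r: "r \<in> set rs" for r
  proof -
    have "poly P (r0 + r) = 0" using add[of r0 r] rs_roots[OF r0(1)] rs_roots[OF r] by simp
    hence "r0 + r \<in> set rs" by (rule roots)
    hence "v (t - r0) \<le> v (t - (r0 + r))" by (rule r0min)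
    hence 1: "v u \<le> v (u - r)" by (simp add: u_def algebra_simps)
    have "v r = v (u - (u - r))" by simp
    also have "\<dots> \<le> max (v u) (v (u - r))" by (rule v_ultra_diff)
    also have "\<dots> = v (u - r)" using 1 by simp
    finally show ?thesis using 1 v_nonneg[of u] by (simp add: le_max_iff_disj)
  qed
  have cP: "coeff P i = ?l * coeff (fac rs) i"
    using arg_cong[OF rs(2), of "\<lambda>q. coeff q i"] by simp
  have "v (coeff P i) * ?d^i \<le> v (coeff P i) * (v u)^i" using su d0 by (simp add: mult_left_mono power_mono)
  also have "\<dots> = v ?l * (v (coeff (fac rs) i) * (v u)^i)" using cP by (simp add: v_mult)
  also have "\<dots> \<le> v ?l * prod_list (map (\<lambda>r. max (v u) (v r)) rs)"
    using fac_bound[of "v u" rs i] by (simp add: mult_left_mono)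
  also have "\<dots> \<le> v ?l * prod_list (map (\<lambda>r. v (u - r)) rs)"
    using prod_list_mono_real[of rs "\<lambda>r. max (v u) (v r)" "\<lambda>r. v (u - r)"] near by (simp add: mult_left_mono)
  also have "\<dots> = v (poly P u)" using polyP[of u] by (simp add: v_mult v_prod_list o_def)
  also have "\<dots> = v (poly P z - a)" using Pt Pu by simp
  finally show ?thesis .
qed

end

theorem mainTheorem3:
  fixes v :: "'a::field \<Rightarrow> real" and K :: "'a set"
  assumes "nonarch_abs v"
    and "subfield K"
    and "complete_wrt v K"
    and "nontrivially_valued v K"
    and "\<not> spherically_complete v K"
    and "spherically_complete v UNIV"
    and "immediate_ext v K"
    and "alg_closed_sub K"
    and "\<exists>p::nat. p > 0 \<and> of_nat p = (0::'a)"
  shows "\<exists>x::nat \<Rightarrow> 'a.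
           (\<forall>i. x i \<notin> K) \<and> (\<forall>i j. i \<noteq> j \<longrightarrow> x i - x j \<notin> K) \<and>
           (\<forall>I::nat set. \<forall>lam::nat \<Rightarrow> 'a. finite I \<longrightarrow> I \<noteq> {} \<longrightarrow> (\<forall>i\<in>I. lam i \<in> K) \<longrightarrow>
              qnorm v K (\<Sum>i\<in>I. lam i * x i) = (MAX i\<in>I. qnorm v K (lam i * x i)))"
proof -
  interpret vf v K using assms(1,2) by (rule vf.intro)
  define p where "p = CHAR('a)"
  have pp: "prime p" unfolding p_def using assms(9) CHAR_pos_iff prime_CHAR_semidom by blast
  have p1: "1 < p" using pp prime_gt_1_nat by blast
  have frob_add: "(x + y)^(p^k) = x^(p^k) + y^(p^k)" for x y :: 'a and k
    using freshmans_dream'[where m="p^k" and n=k and x=x and y=y] pp unfolding p_def by simp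
  have frob_diff: "(x - y)^(p^k) = x^(p^k) - y^(p^k)" for x y :: 'a and k
  proof -
    have "x^(p^k) = (x-y)^(p^k) + y^(p^k)" using frob_add[of "x-y" y k] by simp
    thus ?thesis by (simp add: eq_diff_eq)
  qed
  have "K \<noteq> UNIV" using assms(5,6) by auto
  then obtain z where zK: "z \<notin> K" by auto
  define d where "d = qnorm v K z"
  have dpos: "0 < d" using d_pos assms(3) zK by (simp add: d_def)
  define x where "x i = z^(p^i)" for i
  have LB: "v (lam j) * d^(p^j) \<le> qnorm v K (\<Sum>i\<in>I. lam i * x i)"
    if fI: "finite I" and lK: "\<forall>i\<in>I. lam i \<in> K" and jI: "j \<in> I" for I lam j
  proof -
    define P where "P = (\<Sum>k\<in>I. monom (lam k) (p^k))"
    have polyP: "poly P y = (\<Sum>k\<in>I. lam k * y^(p^k))" for y by (simp add: P_def poly_sum poly_monom)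
    have addP: "poly P (y + w) = poly P y + poly P w" for y w
      by (simp add: polyP frob_add distrib_left sum.distrib)
    have coeffP: "coeff P n = (\<Sum>k\<in>I. if p^k = n then lam k else 0)" for n by (simp add: P_def coeff_sum)
    have cK: "\<forall>n. coeff P n \<in> K" using lK by (auto simp: coeffP intro!: K_sum)
    have cj: "coeff P (p^j) = lam j"
    proof -
      have "coeff P (p^j) = (\<Sum>k\<in>I. if k = j then lam k else 0)" using p1 by (simp add: coeffP)
      also have "\<dots> = lam j" using fI jI by simp
      finally show ?thesis .
    qed
    show ?thesis
    proof (rule Q3)
      fix a assume aK: "a \<in> K"
      have "v (coeff P (p^j)) * (qnorm v K z)^(p^j) \<le> v (poly P z - a)"
        by (rule main_lb[OF assms(8) cK addP aK])
      thus "v (lam j) * d^(p^j) \<le> v ((\<Sum>i\<in>I. lam i * x i) - a)" by (simp add: cj polyP x_def d_def)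
    qed
  qed
  have UB: "qnorm v K (c * x i) \<le> v c * d^(p^i)" if cK: "c \<in> K" for c i
  proof -
    have "qnorm v K (c * x i) \<le> v c * qnorm v K (x i)" by (rule Q6[OF cK])
    also have "\<dots> \<le> v c * d^(p^i)"
    proof -
      have "qnorm v K (z^(p^i)) \<le> qnorm v K z ^ (p^i)" by (rule Q7) (use p1 frob_diff in auto)
      thus ?thesis unfolding x_def d_def by (simp add: mult_left_mono)
    qed
    finally show ?thesis .
  qed
  have notK: "y \<notin> K" if "0 < qnorm v K y" for y
    using that Q1[of y y] by auto
  show ?thesis
  proof (intro exI conjI allI impI)
    fix i
    have "v 1 * d^(p^i) \<le> qnorm v K (\<Sum>k\<in>{i}. 1 * x k)" by (rule LB) auto
    hence "0 < qnorm v K (x i)" using zero_less_power[OF dpos, of "p^i"] by simp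
    thus "x i \<notin> K" by (rule notK)
  next
    fix i j :: nat assume ij: "i \<noteq> j"
    have "v ((\<lambda>k. if k = i then 1 else -1) i) * d^(p^i) \<le>
       qnorm v K (\<Sum>k\<in>{i,j}. (\<lambda>k. if k = i then 1 else -1) k * x k)" by (rule LB) (auto intro: K_uminus)
    hence "0 < qnorm v K (x i - x j)" using zero_less_power[OF dpos, of "p^i"] ij by simp
    thus "x i - x j \<notin> K" by (rule notK)
  next
    fix I :: "nat set" and lam
    assume fI: "finite I" and ne: "I \<noteq> {}" and lK: "\<forall>i\<in>I. lam i \<in> K"
    let ?M = "MAX i\<in>I. v (lam i) * d^(p^i)"
    have 1: "?M \<le> qnorm v K (\<Sum>i\<in>I. lam i * x i)" using LB[OF fI lK] fI ne by simp
    have 2: "qnorm v K (\<Sum>i\<in>I. lam i * x i) \<le> (MAX i\<in>I. qnorm v K (lam i * x i))" by (rule Q5sum[OF fI ne])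
    have 3: "(MAX i\<in>I. qnorm v K (lam i * x i)) \<le> ?M"
    proof -
      have "qnorm v K (lam i * x i) \<le> ?M" if "i \<in> I" for i
        using UB[of "lam i" i] lK that fI by (meson Max_ge finite_imageI image_eqI order_trans)
      thus ?thesis using fI ne by simp
    qed
    show "qnorm v K (\<Sum>i\<in>I. lam i * x i) = (MAX i\<in>I. qnorm v K (lam i * x i))"
      using 1 2 3 by linarith
  qed
qed

end
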